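(* Let $A=(\alpha_n)_{n\in\mathbb{N}}$ and $B=(\beta_m)_{m\in\mathbb{N}}$ be sequences of positive real numbers with $\alpha_j\neq\alpha_\ell$ and $\beta_j\neq\beta_\ell$ for all $1\le j<\ell<\infty$. Consider urn model II with these weights, and let $X_{n,m}$ be the number of white balls remaining when the process stops, started from $n$ white and $m$ black balls. Then for $n,m\ge 1$ and $1\le k\le n$, \[ \mathbb{P}\{X_{n,m}=k\}=\alpha_k\sum_{j=k}^{n}\frac{\alpha_j^{m+n-k-1}}{\Big(\prod_{\substack{\ell=k\\ \ell\neq j}}^{n}(\alpha_j-\alpha_\ell)\Big)\Big(\prod_{h=1}^{m}(\alpha_j+\beta_h)\Big)}=\alpha_k\sum_{\ell=1}^{m}\frac{\beta_\ell^{n+m-1-k}}{\Big(\prod_{j=k}^{n}(\beta_\ell+\alpha_j)\Big)\Big(\prod_{\substack{h=1\\ h\neq\ell}}^{m}(\beta_\ell-\beta_h)\Big)}, \] and for $n,m\ge 1$, \[ \mathbb{P}\{X_{n,m}=0\}=1-\sum_{j=1}^{n}\frac{\alpha_j^{n+m-1}}{\Big(\prod_{\substack{\ell=1\\ \ell\neq j}}^{n}(\alpha_j-\alpha_\ell)\Big)\Big(\prod_{h=1}^{m}(\alpha_j+\beta_h)\Big)}=\sum_{\ell=1}^{m}\frac{\beta_\ell^{n+m-1}}{\Big(\prod_{j=1}^{n}(\beta_\ell+\alpha_j)\Big)\Big(\prod_{\substack{h=1\\ h\neq\ell}}^{m}(\beta_\ell-\beta_h)\Big)}. \]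
   Context: Urn model II (OK Corral urn with general weights): an urn initially contains $n$ white and $m$ black balls. At each step, if the urn currently contains $n'$ white and $m'$ black balls, a white ball is drawn with probability $\beta_{m'}/(\alpha_{n'}+\beta_{m'})$ and a black ball with probability $\alpha_{n'}/(\alpha_{n'}+\beta_{m'})$; the drawn ball is discarded. The process stops as soon as one colour is exhausted. $X_{n,m}$ denotes the number of white balls in the urn when the process stops ($0$ if the white balls are exhausted first). Empty products equal $1$. *)

theory Defs
  imports "HOL-Probability.Probability"
begin

text \<open>With n' white and m' black balls present, a white ball is drawn (and discarded)
  with probability be m' / (al n' + be m'), a black one otherwise.\<close>

fun urnII :: "(nat \<Rightarrow> real) \<Rightarrow> (nat \<Rightarrow> real) \<Rightarrow> nat \<Rightarrow> nat \<Rightarrow> nat pmf" where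
  "urnII al be 0 m = return_pmf 0"
| "urnII al be (Suc n) 0 = return_pmf (Suc n)"
| "urnII al be (Suc n) (Suc m) =
     bind_pmf (bernoulli_pmf (be (Suc m) / (al (Suc n) + be (Suc m))))
       (\<lambda>w. if w then urnII al be n (Suc m) else urnII al be (Suc n) m)"

end

theory Submission imports Defs begin

lemma urn_rec:
  assumes "al (Suc n) > 0" "be (Suc m) > 0"
  shows "(al (Suc n) + be (Suc m)) * pmf (urnII al be (Suc n) (Suc m)) k
     = be (Suc m) * pmf (urnII al be n (Suc m)) k + al (Suc n) * pmf (urnII al be (Suc n) m) k"
proof -
  let ?p = "be (Suc m) / (al (Suc n) + be (Suc m))"
  have p: "0 \<le> ?p" "?p \<le> 1" using assms by (auto simp: field_simps)
  have "pmf (urnII al be (Suc n) (Suc m)) k = ?p * pmf (urnII al be n (Suc m)) k + (1 - ?p) * pmf (urnII al be (Suc n) m) k"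
    using p by (simp add: pmf_bind mult.commute)
  moreover have "1 - ?p = al (Suc n) / (al (Suc n) + be (Suc m))" using assms by (simp add: field_simps)
  ultimately have "pmf (urnII al be (Suc n) (Suc m)) k = (be (Suc m) * pmf (urnII al be n (Suc m)) k + al (Suc n) * pmf (urnII al be (Suc n) m) k) / (al (Suc n) + be (Suc m))"
    by (simp add: add_divide_distrib)
  moreover have "al (Suc n) + be (Suc m) \<noteq> 0" using assms by simp
  ultimately show ?thesis by simp
qed

definition dd :: "(nat \<Rightarrow> real) \<Rightarrow> nat set \<Rightarrow> nat \<Rightarrow> real" where
  "dd x S r = (\<Sum>j\<in>S. x j ^ r / (\<Prod>l\<in>S-{j}. x j - x l))"

lemma dd_rec:
  assumes "finite S" "a \<in> S" "inj_on x S"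
  shows "dd x S (Suc r) = x a * dd x S r + dd x (S - {a}) r"
proof -
  define T where "T = S - {a}"
  have S: "S = insert a T" "a \<notin> T" "finite T" using assms by (auto simp: T_def)
  have e1: "S - {j} = insert a (T - {j})" if "j \<in> T" for j using that S by auto
  have e2: "S - {a} = T" using S by auto
  have trm: "x j ^ Suc r / (\<Prod>l\<in>S-{j}. x j - x l) = x a * (x j ^ r / (\<Prod>l\<in>S-{j}. x j - x l)) + x j ^ r / (\<Prod>l\<in>T-{j}. x j - x l)"
    if j: "j \<in> T" for j
  proof -
    have ne: "x j \<noteq> x a" using j S assms(3) by (metis inj_on_def insertCI)
    have pr: "(\<Prod>l\<in>S-{j}. x j - x l) = (x j - x a) * (\<Prod>l\<in>T-{j}. x j - x l)"
      using e1[OF j] S by (simp add: prod.insert)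
    show ?thesis unfolding pr using ne
      by (cases "(\<Prod>l\<in>T-{j}. x j - x l) = 0") (simp_all add: field_simps)
  qed
  have sumeq: "(\<Sum>j\<in>T. x j ^ Suc r / (\<Prod>l\<in>S-{j}. x j - x l)) = (\<Sum>j\<in>T. x a * (x j ^ r / (\<Prod>l\<in>S-{j}. x j - x l))) + (\<Sum>j\<in>T. x j ^ r / (\<Prod>l\<in>T-{j}. x j - x l))"
    unfolding sum.distrib[symmetric] by (rule sum.cong[OF refl trm])
  have "dd x S (Suc r) = x a ^ Suc r / (\<Prod>l\<in>T. x a - x l) + (\<Sum>j\<in>T. x j ^ Suc r / (\<Prod>l\<in>S-{j}. x j - x l))"
    unfolding dd_def using S e2 by (simp add: sum.insert)
  also have "\<dots> = x a * (x a ^ r / (\<Prod>l\<in>T. x a - x l)) + ((\<Sum>j\<in>T. x a * (x j ^ r / (\<Prod>l\<in>S-{j}. x j - x l))) + (\<Sum>j\<in>T. x j ^ r / (\<Prod>l\<in>T-{j}. x j - x l)))"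
    unfolding sumeq by simp
  also have "\<dots> = x a * (x a ^ r / (\<Prod>l\<in>T. x a - x l)) + (x a * (\<Sum>j\<in>T. (x j ^ r / (\<Prod>l\<in>S-{j}. x j - x l))) + (\<Sum>j\<in>T. x j ^ r / (\<Prod>l\<in>T-{j}. x j - x l)))"
    by (simp only: sum_distrib_left)
  also have "\<dots> = x a * dd x S r + dd x T r"
    unfolding dd_def using S e2 by (simp add: sum.insert algebra_simps)
  finally show ?thesis by (simp add: T_def)
qed

lemma dd_main:
  assumes "finite S" "S \<noteq> {}" "inj_on x S"
  shows "(\<forall>r. r + 2 \<le> card S \<longrightarrow> dd x S r = 0) \<and> dd x S (card S - 1) = 1"
  using assms
proof (induction "card S" arbitrary: S rule: less_induct)
  case less
  show ?case
  proof (cases "card S = 1")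
    case True
    then obtain a where "S = {a}" by (auto simp: card_Suc_eq)
    thus ?thesis by (simp add: dd_def)
  next
    case False
    have "card S > 0" using less.prems card_gt_0_iff by blast
    with False have c2: "card S \<ge> 2" by linarith
    obtain a where a: "a \<in> S" using less.prems by blast
    have "card (S - {a}) > 0" using a c2 less.prems by simp
    then obtain b where "b \<in> S - {a}" by (metis card_gt_0_iff ex_in_conv)
    with a have ab: "a \<in> S" "b \<in> S" "a \<noteq> b" by auto
    have xab: "x a \<noteq> x b" using ab less.prems(3) by (meson inj_onD)
    have IHa: "(\<forall>r. r + 2 \<le> card (S-{a}) \<longrightarrow> dd x (S-{a}) r = 0) \<and> dd x (S-{a}) (card (S-{a}) - 1) = 1"
      apply (rule less.hyps) using ab less.prems c2 by (auto simp: card_Diff1_less inj_on_diff)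
    have IHb: "(\<forall>r. r + 2 \<le> card (S-{b}) \<longrightarrow> dd x (S-{b}) r = 0) \<and> dd x (S-{b}) (card (S-{b}) - 1) = 1"
      apply (rule less.hyps) using ab less.prems c2 by (auto simp: card_Diff1_less inj_on_diff)
    have ca: "card (S-{a}) = card S - 1" "card (S-{b}) = card S - 1" using ab less.prems by auto
    have zero: "dd x S r = 0" if r: "r + 2 \<le> card S" for r
    proof -
      have "(x a - x b) * dd x S r = dd x (S-{b}) r - dd x (S-{a}) r"
        using dd_rec[OF less.prems(1) ab(1) less.prems(3), of r] dd_rec[OF less.prems(1) ab(2) less.prems(3), of r]
        by (simp add: algebra_simps)
      also have "\<dots> = 0"
      proof (cases "r + 2 \<le> card S - 1")
        case True thus ?thesis using IHa IHb ca by simp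
      next
        case False
        hence "r = card S - 1 - 1" using r by linarith
        thus ?thesis using IHa IHb ca by simp
      qed
      finally show ?thesis using xab by simp
    qed
    have "dd x S (card S - 1) = dd x S (Suc (card S - 2))" using c2 by (simp add: Suc_diff_Suc numeral_2_eq_2)
    also have "\<dots> = x a * dd x S (card S - 2) + dd x (S-{a}) (card S - 2)"
      by (rule dd_rec[OF less.prems(1) ab(1) less.prems(3)])
    also have "\<dots> = 1" using zero[of "card S - 2"] c2 IHa ca by (simp add: numeral_2_eq_2)
    finally show ?thesis using zero by blast
  qed
qed


definition sT :: "(nat\<Rightarrow>real)\<Rightarrow>(nat\<Rightarrow>real)\<Rightarrow>nat\<Rightarrow>nat\<Rightarrow>nat\<Rightarrow>nat\<Rightarrow>nat\<Rightarrow>real" where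
  "sT al be k c n m j = al j ^ (m+n-c) / ((\<Prod>l\<in>{k..n}-{j}. al j - al l) * (\<Prod>h=1..m. al j + be h))"

definition Sa :: "(nat\<Rightarrow>real)\<Rightarrow>(nat\<Rightarrow>real)\<Rightarrow>nat\<Rightarrow>nat\<Rightarrow>nat\<Rightarrow>nat\<Rightarrow>real" where
  "Sa al be k c n m = (\<Sum>j=k..n. sT al be k c n m j)"

definition gT :: "(nat\<Rightarrow>real)\<Rightarrow>(nat\<Rightarrow>real)\<Rightarrow>nat\<Rightarrow>nat\<Rightarrow>nat\<Rightarrow>nat\<Rightarrow>nat\<Rightarrow>real" where
  "gT al be k c n m l = be l ^ (n+m-c) / ((\<Prod>j=k..n. be l + al j) * (\<Prod>h\<in>{1..m}-{l}. be l - be h))"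

definition Gb :: "(nat\<Rightarrow>real)\<Rightarrow>(nat\<Rightarrow>real)\<Rightarrow>nat\<Rightarrow>nat\<Rightarrow>nat\<Rightarrow>nat\<Rightarrow>real" where
  "Gb al be k c n m = (\<Sum>l=1..m. gT al be k c n m l)"

lemma alg1:
  fixes a an bm D Q :: real
  assumes "D \<noteq> 0" "Q \<noteq> 0" "a \<noteq> an" "a + bm \<noteq> 0"
  shows "(an+bm)*(a^Suc e/(((a-an)*D)*((a+bm)*Q))) = bm*(a^e/(D*((a+bm)*Q))) + an*(a^e/(((a-an)*D)*Q))"
proof -
  have "a - an \<noteq> 0" using assms by simp
  hence "(an+bm)*(a^Suc e/(((a-an)*D)*((a+bm)*Q))) = (an+bm)*a*a^e/(((a-an)*D)*((a+bm)*Q))" by simp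
  also have "\<dots> = (bm*(a-an) + an*(a+bm))*a^e/(((a-an)*D)*((a+bm)*Q))" by (simp add: algebra_simps)
  also have "\<dots> = bm*(a-an)*a^e/(((a-an)*D)*((a+bm)*Q)) + an*(a+bm)*a^e/(((a-an)*D)*((a+bm)*Q))"
    by (simp add: add_divide_distrib distrib_right)
  also have "\<dots> = bm*(a^e/(D*((a+bm)*Q))) + an*(a^e/(((a-an)*D)*Q))"
    using \<open>a - an \<noteq> 0\<close> assms by simp
  finally show ?thesis .
qed
lemma alg2:
  fixes an bm D Q :: real
  assumes "an + bm \<noteq> 0"
  shows "(an+bm)*(an^Suc e/(D*((an+bm)*Q))) = an*(an^e/(D*Q))"
  using assms by simp
lemma alg3:
  fixes b an bm R E :: real
  assumes "R \<noteq> 0" "E \<noteq> 0" "b \<noteq> bm" "b + an \<noteq> 0"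
  shows "(an+bm)*(b^Suc e/(((b+an)*R)*((b-bm)*E))) = bm*(b^e/(R*((b-bm)*E))) + an*(b^e/(((b+an)*R)*E))"
proof -
  have "b - bm \<noteq> 0" using assms by simp
  hence "(an+bm)*(b^Suc e/(((b+an)*R)*((b-bm)*E))) = (an+bm)*b*b^e/(((b+an)*R)*((b-bm)*E))" by simp
  also have "\<dots> = (bm*(b+an) + an*(b-bm))*b^e/(((b+an)*R)*((b-bm)*E))" by (simp add: algebra_simps)
  also have "\<dots> = bm*(b+an)*b^e/(((b+an)*R)*((b-bm)*E)) + an*(b-bm)*b^e/(((b+an)*R)*((b-bm)*E))"
    by (simp add: add_divide_distrib distrib_right)
  also have "\<dots> = bm*(b^e/(R*((b-bm)*E))) + an*(b^e/(((b+an)*R)*E))"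
    using \<open>b - bm \<noteq> 0\<close> assms by simp
  finally show ?thesis .
qed
lemma alg4:
  fixes an bm R E :: real
  assumes "bm + an \<noteq> 0"
  shows "(an+bm)*(bm^Suc e/(((bm+an)*R)*E)) = bm*(bm^e/(R*E))"
  using assms by (simp add: add.commute)

lemma Sa_rec:
  assumes "k \<le> Suc n" "c < Suc m + Suc n" "inj_on al {k..Suc n}"
    "\<And>j h. j \<in> {k..Suc n} \<Longrightarrow> h \<in> {1..Suc m} \<Longrightarrow> al j + be h \<noteq> 0"
  shows "(al (Suc n) + be (Suc m)) * Sa al be k c (Suc n) (Suc m)
     = be (Suc m) * Sa al be k c n (Suc m) + al (Suc n) * Sa al be k c (Suc n) m"
proof -
  define e where "e = Suc m + Suc n - c - 1"
  have e: "Suc m + Suc n - c = Suc e" "Suc m + n - c = e" "m + Suc n - c = e"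
    using assms(2) unfolding e_def by linarith+
  have I: "{k..Suc n} = insert (Suc n) {k..n}" using assms(1) by (simp add: atLeastAtMostSuc_conv)
  have H: "{1..Suc m} = insert (Suc m) {1..m}" by (simp add: atLeastAtMostSuc_conv)
  have pt: "(al (Suc n) + be (Suc m)) * sT al be k c (Suc n) (Suc m) j
      = be (Suc m) * sT al be k c n (Suc m) j + al (Suc n) * sT al be k c (Suc n) m j" if j: "j \<in> {k..n}" for j
  proof -
    have s1: "{k..Suc n} - {j} = insert (Suc n) ({k..n} - {j})" using I j by auto
    have D: "(\<Prod>l\<in>{k..n}-{j}. al j - al l) \<noteq> 0"
      using assms(3) j by (auto simp: inj_on_def)
    have Q: "(\<Prod>h=1..m. al j + be h) \<noteq> 0" using assms(4) j by auto
    have ne: "al j \<noteq> al (Suc n)"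
    proof
      assume "al j = al (Suc n)"
      hence "j = Suc n" using inj_onD[OF assms(3)] j assms(1) by auto
      with j show False by simp
    qed
    have ab: "al j + be (Suc m) \<noteq> 0" using assms(4) j by auto
    show ?thesis unfolding sT_def e s1 H using alg1[OF D Q ne ab]
      by (simp add: prod.insert)
  qed
  have pn: "(al (Suc n) + be (Suc m)) * sT al be k c (Suc n) (Suc m) (Suc n)
      = al (Suc n) * sT al be k c (Suc n) m (Suc n)"
  proof -
    have s1: "{k..Suc n} - {Suc n} = {k..n}" using I by auto
    have ab: "al (Suc n) + be (Suc m) \<noteq> 0" using assms(4) assms(1) by auto
    show ?thesis unfolding sT_def e s1 H using alg2[OF ab]
      by (simp add: prod.insert)
  qed
  have "(al (Suc n) + be (Suc m)) * Sa al be k c (Suc n) (Suc m)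
      = (al (Suc n) + be (Suc m)) * sT al be k c (Suc n) (Suc m) (Suc n) + (\<Sum>j=k..n. (al (Suc n) + be (Suc m)) * sT al be k c (Suc n) (Suc m) j)"
    unfolding Sa_def I by (simp add: sum_distrib_left distrib_left)
  also have "\<dots> = al (Suc n) * sT al be k c (Suc n) m (Suc n) + (\<Sum>j=k..n. be (Suc m) * sT al be k c n (Suc m) j + al (Suc n) * sT al be k c (Suc n) m j)"
    using pn pt by simp
  also have "\<dots> = be (Suc m) * Sa al be k c n (Suc m) + al (Suc n) * Sa al be k c (Suc n) m"
    unfolding Sa_def I by (simp add: sum.distrib sum_distrib_left algebra_simps)
  finally show ?thesis .
qed

lemma Gb_rec:
  assumes "k \<le> Suc n" "c < Suc n + Suc m" "inj_on be {1..Suc m}"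
    "\<And>j h. j \<in> {k..Suc n} \<Longrightarrow> h \<in> {1..Suc m} \<Longrightarrow> be h + al j \<noteq> 0"
  shows "(al (Suc n) + be (Suc m)) * Gb al be k c (Suc n) (Suc m)
     = be (Suc m) * Gb al be k c n (Suc m) + al (Suc n) * Gb al be k c (Suc n) m"
proof -
  define e where "e = Suc n + Suc m - c - 1"
  have e: "Suc n + Suc m - c = Suc e" "n + Suc m - c = e" "Suc n + m - c = e"
    using assms(2) unfolding e_def by linarith+
  have I: "{k..Suc n} = insert (Suc n) {k..n}" using assms(1) by (simp add: atLeastAtMostSuc_conv)
  have H: "{1..Suc m} = insert (Suc m) {1..m}" by (simp add: atLeastAtMostSuc_conv)
  have pt: "(al (Suc n) + be (Suc m)) * gT al be k c (Suc n) (Suc m) l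
      = be (Suc m) * gT al be k c n (Suc m) l + al (Suc n) * gT al be k c (Suc n) m l" if l: "l \<in> {1..m}" for l
  proof -
    have s1: "{1..Suc m} - {l} = insert (Suc m) ({1..m} - {l})" using H l by auto
    have E: "(\<Prod>h\<in>{1..m}-{l}. be l - be h) \<noteq> 0"
      using assms(3) l by (auto simp: inj_on_def)
    have R: "(\<Prod>j=k..n. be l + al j) \<noteq> 0" using assms(4) l I by auto
    have ne: "be l \<noteq> be (Suc m)"
    proof
      assume "be l = be (Suc m)"
      hence "l = Suc m" using inj_onD[OF assms(3)] l by auto
      with l show False by simp
    qed
    have ab: "be l + al (Suc n) \<noteq> 0" using assms(4) l I by auto
    show ?thesis unfolding gT_def e s1 I using alg3[OF R E ne ab]
      by (simp add: prod.insert)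
  qed
  have pn: "(al (Suc n) + be (Suc m)) * gT al be k c (Suc n) (Suc m) (Suc m)
      = be (Suc m) * gT al be k c n (Suc m) (Suc m)"
  proof -
    have s1: "{1..Suc m} - {Suc m} = {1..m}" using H by auto
    have ab: "be (Suc m) + al (Suc n) \<noteq> 0" using assms(4) assms(1) by auto
    show ?thesis unfolding gT_def e s1 I using alg4[OF ab]
      by (simp add: prod.insert)
  qed
  have "(al (Suc n) + be (Suc m)) * Gb al be k c (Suc n) (Suc m)
      = (al (Suc n) + be (Suc m)) * gT al be k c (Suc n) (Suc m) (Suc m) + (\<Sum>l=1..m. (al (Suc n) + be (Suc m)) * gT al be k c (Suc n) (Suc m) l)"
    unfolding Gb_def H by (simp add: sum_distrib_left distrib_left)
  also have "\<dots> = be (Suc m) * gT al be k c n (Suc m) (Suc m) + (\<Sum>l=1..m. be (Suc m) * gT al be k c n (Suc m) l + al (Suc n) * gT al be k c (Suc n) m l)"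
    using pn pt by simp
  also have "\<dots> = be (Suc m) * Gb al be k c n (Suc m) + al (Suc n) * Gb al be k c (Suc n) m"
    unfolding Gb_def H by (simp add: sum.distrib sum_distrib_left algebra_simps)
  finally show ?thesis .
qed


lemma set_urn: "set_pmf (urnII al be n m) \<subseteq> {..n}"
  proof (induction al be n m rule: urnII.induct)
  case (3 al be n m)
  have "set_pmf (if w then urnII al be n (Suc m) else urnII al be (Suc n) m) \<subseteq> {..Suc n}"
    if "w \<in> set_pmf (bernoulli_pmf (be (Suc m) / (al (Suc n) + be (Suc m))))" for w
    using 3(1)[OF that] 3(2)[OF that] by (cases w) auto
  thus ?case by (auto simp: set_bind_pmf)
qed auto

lemma pmf_urn_gt: "n < k \<Longrightarrow> pmf (urnII al be n m) k = 0"
  using set_urn[of al be n m] by (meson atMost_iff not_le pmf_eq_0_set_pmf subsetD)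

lemma pmf_urn_0: "pmf (urnII al be n 0) k = (if n = k then 1 else 0)"
  by (cases n) auto

lemma Sa_m0: "Sa al be k c n 0 = dd al {k..n} (n - c)"
  by (simp add: Sa_def sT_def dd_def)

lemma Gb_n0: "Gb al be k c n 0 = 0"
  by (simp add: Gb_def)

lemma Sa_empty: "n < k \<Longrightarrow> Sa al be k c n m = 0"
  by (simp add: Sa_def)

lemma Gb_empty: "n < k \<Longrightarrow> Gb al be k c n m = dd be {1..m} (n + m - c)"
  by (simp add: Gb_def gT_def dd_def)


lemma card_ge_helper: "finite S \<Longrightarrow> S \<noteq> {} \<Longrightarrow> inj_on x S \<Longrightarrow> r + 2 \<le> card S \<Longrightarrow> dd x S r = 0"
  using dd_main by blast

lemma card_eq_helper: "finite S \<Longrightarrow> S \<noteq> {} \<Longrightarrow> inj_on x S \<Longrightarrow> r = card S - 1 \<Longrightarrow> dd x S r = 1"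
  using dd_main by blast

lemma part1_S:
  fixes \<alpha> \<beta> :: "nat \<Rightarrow> real"
  assumes pos_a: "\<And>n. n \<ge> 1 \<Longrightarrow> \<alpha> n > 0" and pos_b: "\<And>m. m \<ge> 1 \<Longrightarrow> \<beta> m > 0"
    and inj_a: "inj_on \<alpha> {1..}" and k: "1 \<le> k"
  shows "k \<le> n \<Longrightarrow> 1 \<le> m \<Longrightarrow> pmf (urnII \<alpha> \<beta> n m) k = \<alpha> k * Sa \<alpha> \<beta> k (k+1) n m"
proof (induction n arbitrary: m)
  case 0 thus ?case using k by simp
next
  case (Suc n)
  note outer = Suc.IH
  have kn: "k \<le> Suc n" by fact
  show ?case using \<open>1 \<le> m\<close>
  proof (induction m)
    case 0 thus ?case by simp
  next
    case (Suc m)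
    let ?P = "\<lambda>n m. pmf (urnII \<alpha> \<beta> n m) k"
    let ?S = "\<lambda>n m. \<alpha> k * Sa \<alpha> \<beta> k (k+1) n m"
    have ab: "\<alpha> (Suc n) + \<beta> (Suc m) > 0" using pos_a pos_b by (simp add: add_pos_pos)
    have rec: "(\<alpha> (Suc n) + \<beta> (Suc m)) * ?P (Suc n) (Suc m) = \<beta> (Suc m) * ?P n (Suc m) + \<alpha> (Suc n) * ?P (Suc n) m"
      by (rule urn_rec) (use pos_a pos_b in auto)
    show ?case
    proof (cases "Suc n = k \<and> m = 0")
      case True
      have "?P n (Suc m) = 0" using True by (intro pmf_urn_gt) simp
      moreover have "?P (Suc n) m = 1" using True by (simp add: pmf_urn_0)
      ultimately have "?P (Suc n) (Suc m) = \<alpha> (Suc n) / (\<alpha> (Suc n) + \<beta> (Suc m))" using rec ab by (simp add: field_simps)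
      moreover have "Sa \<alpha> \<beta> k (k+1) (Suc n) (Suc m) = 1 / (\<alpha> k + \<beta> 1)" using True by (simp add: Sa_def sT_def)
      ultimately show ?thesis using True by simp
    next
      case False
      have A: "?P n (Suc m) = ?S n (Suc m)"
      proof (cases "k \<le> n")
        case True thus ?thesis using outer by simp
      next
        case False thus ?thesis by (simp add: pmf_urn_gt Sa_empty)
      qed
      have B: "?P (Suc n) m = ?S (Suc n) m"
      proof (cases "m = 0")
        case False thus ?thesis using Suc.IH by simp
      next
        case True
        with \<open>\<not>(Suc n = k \<and> m = 0)\<close> have ne: "Suc n \<noteq> k" by simp
        hence kl: "k < Suc n" using kn by simp
        have "dd \<alpha> {k..Suc n} (Suc n - (k+1)) = 0"
          by (rule card_ge_helper) (use kl inj_on_subset[OF inj_a] k in auto)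
        thus ?thesis using True ne by (simp add: pmf_urn_0 Sa_m0)
      qed
      have R: "(\<alpha> (Suc n) + \<beta> (Suc m)) * Sa \<alpha> \<beta> k (k+1) (Suc n) (Suc m)
          = \<beta> (Suc m) * Sa \<alpha> \<beta> k (k+1) n (Suc m) + \<alpha> (Suc n) * Sa \<alpha> \<beta> k (k+1) (Suc n) m"
      proof (rule Sa_rec)
        show "k \<le> Suc n" by fact
        show "k + 1 < Suc m + Suc n" using kn False by auto
        show "inj_on \<alpha> {k..Suc n}" by (rule inj_on_subset[OF inj_a]) (use k in auto)
        fix j h assume "j \<in> {k..Suc n}" "h \<in> {1..Suc m}"
        thus "\<alpha> j + \<beta> h \<noteq> 0" using pos_a[of j] pos_b[of h] k by auto
      qed
      have "(\<alpha> (Suc n) + \<beta> (Suc m)) * ?P (Suc n) (Suc m)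
          = \<alpha> k * (\<beta> (Suc m) * Sa \<alpha> \<beta> k (k+1) n (Suc m) + \<alpha> (Suc n) * Sa \<alpha> \<beta> k (k+1) (Suc n) m)"
        using rec A B by (simp add: algebra_simps)
      also have "\<dots> = (\<alpha> (Suc n) + \<beta> (Suc m)) * ?S (Suc n) (Suc m)" using R by simp
      finally show ?thesis using ab by simp
    qed
  qed
qed

lemma part1_G:
  fixes \<alpha> \<beta> :: "nat \<Rightarrow> real"
  assumes pos_a: "\<And>n. n \<ge> 1 \<Longrightarrow> \<alpha> n > 0" and pos_b: "\<And>m. m \<ge> 1 \<Longrightarrow> \<beta> m > 0"
    and inj_b: "inj_on \<beta> {1..}" and k: "1 \<le> k"
  shows "k \<le> n \<Longrightarrow> 1 \<le> m \<Longrightarrow> pmf (urnII \<alpha> \<beta> n m) k = \<alpha> k * Gb \<alpha> \<beta> k (k+1) n m"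
proof (induction n arbitrary: m)
  case 0 thus ?case using k by simp
next
  case (Suc n)
  note outer = Suc.IH
  have kn: "k \<le> Suc n" by fact
  show ?case using \<open>1 \<le> m\<close>
  proof (induction m)
    case 0 thus ?case by simp
  next
    case (Suc m)
    let ?P = "\<lambda>n m. pmf (urnII \<alpha> \<beta> n m) k"
    let ?S = "\<lambda>n m. \<alpha> k * Gb \<alpha> \<beta> k (k+1) n m"
    have ab: "\<alpha> (Suc n) + \<beta> (Suc m) > 0" using pos_a pos_b by (simp add: add_pos_pos)
    have rec: "(\<alpha> (Suc n) + \<beta> (Suc m)) * ?P (Suc n) (Suc m) = \<beta> (Suc m) * ?P n (Suc m) + \<alpha> (Suc n) * ?P (Suc n) m"
      by (rule urn_rec) (use pos_a pos_b in auto)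
    show ?case
    proof (cases "Suc n = k \<and> m = 0")
      case True
      have "?P n (Suc m) = 0" using True by (intro pmf_urn_gt) simp
      moreover have "?P (Suc n) m = 1" using True by (simp add: pmf_urn_0)
      ultimately have "?P (Suc n) (Suc m) = \<alpha> (Suc n) / (\<alpha> (Suc n) + \<beta> (Suc m))" using rec ab by (simp add: field_simps)
      moreover have "Gb \<alpha> \<beta> k (k+1) (Suc n) (Suc m) = 1 / (\<alpha> k + \<beta> 1)" using True by (simp add: Gb_def gT_def add.commute)
      ultimately show ?thesis using True by simp
    next
      case False
      have A: "?P n (Suc m) = ?S n (Suc m)"
      proof (cases "k \<le> n")
        case True thus ?thesis using outer by simp
      next
        case False
        hence kk: "Suc n = k" using kn by simp
        with \<open>\<not>(Suc n = k \<and> m = 0)\<close> have m0: "m \<noteq> 0" by simp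
        have "dd \<beta> {1..Suc m} (n + Suc m - (k+1)) = 0"
          by (rule card_ge_helper) (use kk m0 inj_on_subset[OF inj_b] in auto)
        thus ?thesis using False by (simp add: pmf_urn_gt Gb_empty)
      qed
      have B: "?P (Suc n) m = ?S (Suc n) m"
      proof (cases "m = 0")
        case False thus ?thesis using Suc.IH by simp
      next
        case True
        with \<open>\<not>(Suc n = k \<and> m = 0)\<close> have ne: "Suc n \<noteq> k" by simp
        thus ?thesis using True ne by (simp add: pmf_urn_0 Gb_n0)
      qed
      have R: "(\<alpha> (Suc n) + \<beta> (Suc m)) * Gb \<alpha> \<beta> k (k+1) (Suc n) (Suc m)
          = \<beta> (Suc m) * Gb \<alpha> \<beta> k (k+1) n (Suc m) + \<alpha> (Suc n) * Gb \<alpha> \<beta> k (k+1) (Suc n) m"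
      proof (rule Gb_rec)
        show "k \<le> Suc n" by fact
        show "k + 1 < Suc n + Suc m" using kn False by auto
        show "inj_on \<beta> {1..Suc m}" by (rule inj_on_subset[OF inj_b]) auto
        fix j h assume "j \<in> {k..Suc n}" "h \<in> {1..Suc m}"
        thus "\<beta> h + \<alpha> j \<noteq> 0" using pos_a[of j] pos_b[of h] k by auto
      qed
      have "(\<alpha> (Suc n) + \<beta> (Suc m)) * ?P (Suc n) (Suc m)
          = \<alpha> k * (\<beta> (Suc m) * Gb \<alpha> \<beta> k (k+1) n (Suc m) + \<alpha> (Suc n) * Gb \<alpha> \<beta> k (k+1) (Suc n) m)"
        using rec A B by (simp add: algebra_simps)
      also have "\<dots> = (\<alpha> (Suc n) + \<beta> (Suc m)) * ?S (Suc n) (Suc m)" using R by simp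
      finally show ?thesis using ab by simp
    qed
  qed
qed


lemma part2:
  fixes \<alpha> \<beta> :: "nat \<Rightarrow> real"
  assumes pos_a: "\<And>n. n \<ge> 1 \<Longrightarrow> \<alpha> n > 0" and pos_b: "\<And>m. m \<ge> 1 \<Longrightarrow> \<beta> m > 0"
    and inj_a: "inj_on \<alpha> {1..}" and inj_b: "inj_on \<beta> {1..}"
  shows "1 \<le> n \<Longrightarrow> 1 \<le> m \<Longrightarrow> pmf (urnII \<alpha> \<beta> n m) 0 = 1 - Sa \<alpha> \<beta> 1 1 n m
             \<and> pmf (urnII \<alpha> \<beta> n m) 0 = Gb \<alpha> \<beta> 1 1 n m"
proof (induction n arbitrary: m)
  case 0 thus ?case by simp
next
  case (Suc n)
  note outer = Suc.IH
  show ?case using \<open>1 \<le> m\<close>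
  proof (induction m)
    case 0 thus ?case by simp
  next
    case (Suc m)
    let ?P = "\<lambda>n m. pmf (urnII \<alpha> \<beta> n m) 0"
    have ab: "\<alpha> (Suc n) + \<beta> (Suc m) > 0" using pos_a pos_b by (simp add: add_pos_pos)
    have rec: "(\<alpha> (Suc n) + \<beta> (Suc m)) * ?P (Suc n) (Suc m) = \<beta> (Suc m) * ?P n (Suc m) + \<alpha> (Suc n) * ?P (Suc n) m"
      by (rule urn_rec) (use pos_a pos_b in auto)
    have A: "?P n (Suc m) = 1 - Sa \<alpha> \<beta> 1 1 n (Suc m) \<and> ?P n (Suc m) = Gb \<alpha> \<beta> 1 1 n (Suc m)"
    proof (cases "n = 0")
      case False
      hence "1 \<le> n" "1 \<le> Suc m" by auto
      thus ?thesis using outer by blast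
    next
      case True
      have "dd \<beta> {1..Suc m} (n + Suc m - 1) = 1"
        by (rule card_eq_helper) (use True inj_on_subset[OF inj_b] in auto)
      thus ?thesis using True by (simp add: Sa_empty Gb_empty)
    qed
    have B: "?P (Suc n) m = 1 - Sa \<alpha> \<beta> 1 1 (Suc n) m \<and> ?P (Suc n) m = Gb \<alpha> \<beta> 1 1 (Suc n) m"
    proof (cases "m = 0")
      case False
      hence "1 \<le> m" by auto
      thus ?thesis using Suc.IH by blast
    next
      case True
      have "dd \<alpha> {1..Suc n} (Suc n - 1) = 1"
        by (rule card_eq_helper) (use inj_on_subset[OF inj_a] in auto)
      thus ?thesis using True by (simp add: pmf_urn_0 Sa_m0 Gb_n0)
    qed
    have R1: "(\<alpha> (Suc n) + \<beta> (Suc m)) * Sa \<alpha> \<beta> 1 1 (Suc n) (Suc m)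
        = \<beta> (Suc m) * Sa \<alpha> \<beta> 1 1 n (Suc m) + \<alpha> (Suc n) * Sa \<alpha> \<beta> 1 1 (Suc n) m"
    proof (rule Sa_rec)
      show "inj_on \<alpha> {1..Suc n}" by (rule inj_on_subset[OF inj_a]) auto
      fix j h assume "j \<in> {1..Suc n}" "h \<in> {1..Suc m}"
      thus "\<alpha> j + \<beta> h \<noteq> 0" using pos_a[of j] pos_b[of h] by auto
    qed auto
    have R2: "(\<alpha> (Suc n) + \<beta> (Suc m)) * Gb \<alpha> \<beta> 1 1 (Suc n) (Suc m)
        = \<beta> (Suc m) * Gb \<alpha> \<beta> 1 1 n (Suc m) + \<alpha> (Suc n) * Gb \<alpha> \<beta> 1 1 (Suc n) m"
    proof (rule Gb_rec)
      show "inj_on \<beta> {1..Suc m}" by (rule inj_on_subset[OF inj_b]) auto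
      fix j h assume "j \<in> {1..Suc n}" "h \<in> {1..Suc m}"
      thus "\<beta> h + \<alpha> j \<noteq> 0" using pos_a[of j] pos_b[of h] by auto
    qed auto
    have "(\<alpha> (Suc n) + \<beta> (Suc m)) * ?P (Suc n) (Suc m)
        = (\<alpha> (Suc n) + \<beta> (Suc m)) - (\<beta> (Suc m) * Sa \<alpha> \<beta> 1 1 n (Suc m) + \<alpha> (Suc n) * Sa \<alpha> \<beta> 1 1 (Suc n) m)"
      using rec A B by (simp add: algebra_simps)
    also have "\<dots> = (\<alpha> (Suc n) + \<beta> (Suc m)) * (1 - Sa \<alpha> \<beta> 1 1 (Suc n) (Suc m))" using R1 by (simp add: algebra_simps)
    finally have C1: "?P (Suc n) (Suc m) = 1 - Sa \<alpha> \<beta> 1 1 (Suc n) (Suc m)" using ab by simp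
    have "(\<alpha> (Suc n) + \<beta> (Suc m)) * ?P (Suc n) (Suc m)
        = (\<alpha> (Suc n) + \<beta> (Suc m)) * Gb \<alpha> \<beta> 1 1 (Suc n) (Suc m)"
      using rec R2 conjunct2[OF A] conjunct2[OF B] by (simp del: urnII.simps)
    hence C2: "?P (Suc n) (Suc m) = Gb \<alpha> \<beta> 1 1 (Suc n) (Suc m)" using ab by simp
    show ?case using C1 C2 by simp
  qed
qed

theorem theorem2:
  fixes \<alpha> \<beta> :: "nat \<Rightarrow> real"
  assumes pos_a: "\<And>n. n \<ge> 1 \<Longrightarrow> \<alpha> n > 0"
    and pos_b: "\<And>m. m \<ge> 1 \<Longrightarrow> \<beta> m > 0"
    and inj_a: "inj_on \<alpha> {1..}"
    and inj_b: "inj_on \<beta> {1..}"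
  shows "(\<forall>n m k. 1 \<le> n \<longrightarrow> 1 \<le> m \<longrightarrow> 1 \<le> k \<longrightarrow> k \<le> n \<longrightarrow>
            pmf (urnII \<alpha> \<beta> n m) k
              = \<alpha> k * (\<Sum>j=k..n. \<alpha> j ^ (m + n - k - 1) /
                   ((\<Prod>l\<in>{k..n} - {j}. \<alpha> j - \<alpha> l) * (\<Prod>h=1..m. \<alpha> j + \<beta> h)))
            \<and> \<alpha> k * (\<Sum>j=k..n. \<alpha> j ^ (m + n - k - 1) /
                   ((\<Prod>l\<in>{k..n} - {j}. \<alpha> j - \<alpha> l) * (\<Prod>h=1..m. \<alpha> j + \<beta> h)))
              = \<alpha> k * (\<Sum>l=1..m. \<beta> l ^ (n + m - 1 - k) /
                   ((\<Prod>j=k..n. \<beta> l + \<alpha> j) * (\<Prod>h\<in>{1..m} - {l}. \<beta> l - \<beta> h))))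
       \<and> (\<forall>n m. 1 \<le> n \<longrightarrow> 1 \<le> m \<longrightarrow>
            pmf (urnII \<alpha> \<beta> n m) 0
              = 1 - (\<Sum>j=1..n. \<alpha> j ^ (n + m - 1) /
                   ((\<Prod>l\<in>{1..n} - {j}. \<alpha> j - \<alpha> l) * (\<Prod>h=1..m. \<alpha> j + \<beta> h)))
            \<and> 1 - (\<Sum>j=1..n. \<alpha> j ^ (n + m - 1) /
                   ((\<Prod>l\<in>{1..n} - {j}. \<alpha> j - \<alpha> l) * (\<Prod>h=1..m. \<alpha> j + \<beta> h)))
              = (\<Sum>l=1..m. \<beta> l ^ (n + m - 1) /
                   ((\<Prod>j=1..n. \<beta> l + \<alpha> j) * (\<Prod>h\<in>{1..m} - {l}. \<beta> l - \<beta> h))))"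
proof (intro conjI allI impI)
  fix n m k :: nat
  assume h: "1 \<le> n" "1 \<le> m" "1 \<le> k" "k \<le> n"
  have e1: "Sa \<alpha> \<beta> k (k+1) n m = (\<Sum>j=k..n. \<alpha> j ^ (m + n - k - 1) /
                   ((\<Prod>l\<in>{k..n} - {j}. \<alpha> j - \<alpha> l) * (\<Prod>h=1..m. \<alpha> j + \<beta> h)))"
    unfolding Sa_def sT_def by (simp add: diff_diff_left)
  have e2: "Gb \<alpha> \<beta> k (k+1) n m = (\<Sum>l=1..m. \<beta> l ^ (n + m - 1 - k) /
                   ((\<Prod>j=k..n. \<beta> l + \<alpha> j) * (\<Prod>h\<in>{1..m} - {l}. \<beta> l - \<beta> h)))"
    unfolding Gb_def gT_def by (simp add: diff_diff_left add.commute)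
  have S: "pmf (urnII \<alpha> \<beta> n m) k = \<alpha> k * Sa \<alpha> \<beta> k (k+1) n m"
    using part1_S[OF pos_a pos_b inj_a h(3) h(4) h(2)] by simp
  have G: "pmf (urnII \<alpha> \<beta> n m) k = \<alpha> k * Gb \<alpha> \<beta> k (k+1) n m"
    using part1_G[OF pos_a pos_b inj_b h(3) h(4) h(2)] by simp
  show "pmf (urnII \<alpha> \<beta> n m) k
              = \<alpha> k * (\<Sum>j=k..n. \<alpha> j ^ (m + n - k - 1) /
                   ((\<Prod>l\<in>{k..n} - {j}. \<alpha> j - \<alpha> l) * (\<Prod>h=1..m. \<alpha> j + \<beta> h)))"
    using S e1 by simp
  show "\<alpha> k * (\<Sum>j=k..n. \<alpha> j ^ (m + n - k - 1) /
                   ((\<Prod>l\<in>{k..n} - {j}. \<alpha> j - \<alpha> l) * (\<Prod>h=1..m. \<alpha> j + \<beta> h)))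
              = \<alpha> k * (\<Sum>l=1..m. \<beta> l ^ (n + m - 1 - k) /
                   ((\<Prod>j=k..n. \<beta> l + \<alpha> j) * (\<Prod>h\<in>{1..m} - {l}. \<beta> l - \<beta> h)))"
    using S G e1 e2 by metis
next
  fix n m :: nat
  assume h: "1 \<le> n" "1 \<le> m"
  have e1: "Sa \<alpha> \<beta> 1 1 n m = (\<Sum>j=1..n. \<alpha> j ^ (n + m - 1) /
                   ((\<Prod>l\<in>{1..n} - {j}. \<alpha> j - \<alpha> l) * (\<Prod>h=1..m. \<alpha> j + \<beta> h)))"
    unfolding Sa_def sT_def by (simp add: add.commute)
  have e2: "Gb \<alpha> \<beta> 1 1 n m = (\<Sum>l=1..m. \<beta> l ^ (n + m - 1) /
                   ((\<Prod>j=1..n. \<beta> l + \<alpha> j) * (\<Prod>h\<in>{1..m} - {l}. \<beta> l - \<beta> h)))"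
    unfolding Gb_def gT_def by simp
  have P: "pmf (urnII \<alpha> \<beta> n m) 0 = 1 - Sa \<alpha> \<beta> 1 1 n m \<and> pmf (urnII \<alpha> \<beta> n m) 0 = Gb \<alpha> \<beta> 1 1 n m"
    using part2[OF pos_a pos_b inj_a inj_b h] .
  show "pmf (urnII \<alpha> \<beta> n m) 0
              = 1 - (\<Sum>j=1..n. \<alpha> j ^ (n + m - 1) /
                   ((\<Prod>l\<in>{1..n} - {j}. \<alpha> j - \<alpha> l) * (\<Prod>h=1..m. \<alpha> j + \<beta> h)))"
    using P e1 by simp
  show "1 - (\<Sum>j=1..n. \<alpha> j ^ (n + m - 1) /
                   ((\<Prod>l\<in>{1..n} - {j}. \<alpha> j - \<alpha> l) * (\<Prod>h=1..m. \<alpha> j + \<beta> h)))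
              = (\<Sum>l=1..m. \<beta> l ^ (n + m - 1) /
                   ((\<Prod>j=1..n. \<beta> l + \<alpha> j) * (\<Prod>h\<in>{1..m} - {l}. \<beta> l - \<beta> h)))"
    using P e1 e2 by metis
qed

end
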